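(* Let $C=\bigwedge_{k=1}^m(c_{k,1}\vee c_{k,2}\vee c_{k,3})$ be a 3-SAT formula in $n$ Boolean variables $x_1,\dots,x_n$, where each literal $c_{k,j}$ equals $x_i$ or $\overline{x_i}$ for some $i$. On $m+n$ qubits labelled $\{1,\dots,n\}\cup\{d_1,\dots,d_m\}$ define \[H_C=\sum_{k=1}^m-(X_{d_k}+Z_{d_k}+I)\otimes\big(S(c_{k,1})+S(c_{k,2})+S(c_{k,3})+2I\big),\] where $S(c)=Z_i$ if $c=x_i$ and $S(c)=X_i$ if $c=\overline{x_i}$. For $x\in\{0,1\}^n$, $y\in\{0,1\}^m$ let ${\sf W}(x,y)=\big(\bigotimes_{i=1}^n W_i^{x_i}\big)\otimes\big(\bigotimes_{j=1}^m W_{d_j}^{y_j}\big)$, with $W$ the Hadamard gate. Then for every $x\in\{0,1\}^n$: $C(x)$ evaluates to true if and only if for all $y\in\{0,1\}^m$ the matrix ${\sf W}(x,y)H_C{\sf W}(x,y)^\dagger$ is a symmetric $Z$-matrix.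
   Context: A Hermitian matrix is a symmetric $Z$-matrix if it is real and all off-diagonal entries in the computational basis are non-positive. $X_\alpha,Z_\alpha$ denote Pauli matrices on qubit $\alpha$; $W=\frac1{\sqrt2}\begin{pmatrix}1&1\\1&-1\end{pmatrix}$, $W^0=I$, $W^1=W$. *)

theory Defs
  imports Complex_Main "HOL-Library.FuncSet"
begin

text \<open>Qubits are labelled by natural numbers in a finite
  set Q; computational basis states are the functions Q \<rightarrow> bool (bit False = |0>,
  True = |1>), extensional outside Q.  An operator is given by its matrix entries
  A s t = <s|A|t>.\<close>

type_synonym gate = "bool \<Rightarrow> bool \<Rightarrow> complex"
type_synonym qop = "(nat \<Rightarrow> bool) \<Rightarrow> (nat \<Rightarrow> bool) \<Rightarrow> complex"

definition basis :: "nat set \<Rightarrow> (nat \<Rightarrow> bool) set" where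
  "basis Q = Pi\<^sub>E Q (\<lambda>_. UNIV)"

definition I2 :: gate where "I2 a b = (if a = b then 1 else 0)"
definition X2 :: gate where "X2 a b = (if a \<noteq> b then 1 else 0)"
definition Z2 :: gate where "Z2 a b = (if a = b then (if a then -1 else 1) else 0)"
definition Had :: gate where "Had a b = (if a \<and> b then -1 else 1) / complex_of_real (sqrt 2)"

definition Wpow :: "bool \<Rightarrow> gate" where "Wpow b = (if b then Had else I2)"

definition tensor :: "nat set \<Rightarrow> (nat \<Rightarrow> gate) \<Rightarrow> qop" where
  "tensor Q G = (\<lambda>s t. \<Prod>q\<in>Q. G q (s q) (t q))"

definition on_qubit :: "nat set \<Rightarrow> nat \<Rightarrow> gate \<Rightarrow> qop" where
  "on_qubit Q q G = tensor Q (\<lambda>p. if p = q then G else I2)"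

definition qid :: "nat set \<Rightarrow> qop" where "qid Q = tensor Q (\<lambda>_. I2)"

definition qmult :: "nat set \<Rightarrow> qop \<Rightarrow> qop \<Rightarrow> qop" where
  "qmult Q A B = (\<lambda>s t. \<Sum>u\<in>basis Q. A s u * B u t)"

definition qadd :: "qop \<Rightarrow> qop \<Rightarrow> qop" where
  "qadd A B = (\<lambda>s t. A s t + B s t)"

definition qscale :: "complex \<Rightarrow> qop \<Rightarrow> qop" where
  "qscale c A = (\<lambda>s t. c * A s t)"

definition qsum :: "nat set \<Rightarrow> (nat \<Rightarrow> qop) \<Rightarrow> qop" where
  "qsum K F = (\<lambda>s t. \<Sum>k\<in>K. F k s t)"

definition qadj :: "qop \<Rightarrow> qop" where
  "qadj A = (\<lambda>s t. cnj (A t s))"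

definition sym_Zmatrix :: "nat set \<Rightarrow> qop \<Rightarrow> bool" where
  "sym_Zmatrix Q A \<longleftrightarrow>
     (\<forall>s\<in>basis Q. \<forall>t\<in>basis Q.
        A s t = cnj (A t s) \<and> Im (A s t) = 0 \<and> (s \<noteq> t \<longrightarrow> Re (A s t) \<le> 0))"

text \<open>3-SAT: a literal is (i, pos) meaning x_i if pos, and the negation of x_i otherwise.
  Variables are indexed 0..n-1, clauses 0..m-1, literal j of clause k is lit k j (j < 3).\<close>
type_synonym literal = "nat \<times> bool"

definition lit_val :: "(nat \<Rightarrow> bool) \<Rightarrow> literal \<Rightarrow> bool" where
  "lit_val x c = (if snd c then x (fst c) else \<not> x (fst c))"

definition sat3 :: "nat \<Rightarrow> (nat \<Rightarrow> nat \<Rightarrow> literal) \<Rightarrow> (nat \<Rightarrow> bool) \<Rightarrow> bool" where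
  "sat3 m lit x \<longleftrightarrow> (\<forall>k<m. \<exists>j<3. lit_val x (lit k j))"

definition wf3sat :: "nat \<Rightarrow> nat \<Rightarrow> (nat \<Rightarrow> nat \<Rightarrow> literal) \<Rightarrow> bool" where
  "wf3sat n m lit \<longleftrightarrow> (\<forall>k<m. \<forall>j<3. fst (lit k j) < n)"

text \<open>Qubit layout: variable qubit i (0-based) is qubit i; clause qubit d_k (0-based k) is n + k.\<close>
definition qubits :: "nat \<Rightarrow> nat \<Rightarrow> nat set" where "qubits n m = {..<n + m}"

definition Sop :: "nat set \<Rightarrow> literal \<Rightarrow> qop" where
  "Sop Q c = (if snd c then on_qubit Q (fst c) Z2 else on_qubit Q (fst c) X2)"

definition H_C :: "nat \<Rightarrow> nat \<Rightarrow> (nat \<Rightarrow> nat \<Rightarrow> literal) \<Rightarrow> qop" where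
  "H_C n m lit = (let Q = qubits n m in
     qsum {..<m} (\<lambda>k. qscale (-1)
       (qmult Q
          (qadd (qadd (on_qubit Q (n + k) X2) (on_qubit Q (n + k) Z2)) (qid Q))
          (qadd (qadd (qadd (Sop Q (lit k 0)) (Sop Q (lit k 1))) (Sop Q (lit k 2)))
                (qscale 2 (qid Q))))))"

definition Wxy :: "nat \<Rightarrow> nat \<Rightarrow> (nat \<Rightarrow> bool) \<Rightarrow> (nat \<Rightarrow> bool) \<Rightarrow> qop" where
  "Wxy n m x y = tensor (qubits n m) (\<lambda>q. if q < n then Wpow (x q) else Wpow (y (q - n)))"

end

theory Submission imports Defs "HOL-Library.Complex_Order" begin

definition gmult :: "gate \<Rightarrow> gate \<Rightarrow> gate" where
  "gmult A B = (\<lambda>a b. A a False * B False b + A a True * B True b)"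
definition gadj :: "gate \<Rightarrow> gate" where "gadj G = (\<lambda>a b. cnj (G b a))"
definition gconj :: "gate \<Rightarrow> gate \<Rightarrow> gate" where "gconj W G = gmult (gmult W G) (gadj W)"
definition qconj :: "nat set \<Rightarrow> qop \<Rightarrow> qop \<Rightarrow> qop" where
  "qconj Q V A = qmult Q (qmult Q V A) (qadj V)"

lemma sum_bool: "(\<Sum>c\<in>(UNIV::bool set). f c) = f False + f True"
  by (simp add: UNIV_bool)

lemma qmult_tensor:
  assumes "finite Q"
  shows "qmult Q (tensor Q F) (tensor Q G) = tensor Q (\<lambda>q. gmult (F q) (G q))"
proof (intro ext)
  fix s t
  have "qmult Q (tensor Q F) (tensor Q G) s t
      = (\<Sum>u\<in>basis Q. \<Prod>q\<in>Q. F q (s q) (u q) * G q (u q) (t q))"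
    unfolding qmult_def tensor_def by (simp add: prod.distrib)
  also have "\<dots> = (\<Prod>q\<in>Q. \<Sum>c\<in>UNIV. F q (s q) c * G q c (t q))"
    unfolding basis_def by (rule prod_sum_PiE[symmetric]) (use assms in auto)
  also have "\<dots> = tensor Q (\<lambda>q. gmult (F q) (G q)) s t"
    unfolding tensor_def gmult_def by (simp add: sum_bool)
  finally show "qmult Q (tensor Q F) (tensor Q G) s t = tensor Q (\<lambda>q. gmult (F q) (G q)) s t" .
qed

lemma qadj_tensor: "qadj (tensor Q F) = tensor Q (\<lambda>q. gadj (F q))"
  unfolding qadj_def tensor_def gadj_def by (simp add: fun_eq_iff)

lemma qmult_assoc:
  assumes "finite Q"
  shows "qmult Q (qmult Q A B) C = qmult Q A (qmult Q B C)"
proof (intro ext)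
  fix s t
  have "qmult Q (qmult Q A B) C s t = (\<Sum>u\<in>basis Q. \<Sum>v\<in>basis Q. A s v * B v u * C u t)"
    unfolding qmult_def by (simp add: sum_distrib_right)
  also have "\<dots> = (\<Sum>v\<in>basis Q. \<Sum>u\<in>basis Q. A s v * B v u * C u t)"
    by (rule sum.swap)
  also have "\<dots> = qmult Q A (qmult Q B C) s t"
    unfolding qmult_def by (simp add: sum_distrib_left mult.assoc)
  finally show "qmult Q (qmult Q A B) C s t = qmult Q A (qmult Q B C) s t" .
qed

lemma basis_eq: "u \<in> basis Q \<Longrightarrow> v \<in> basis Q \<Longrightarrow> (\<forall>q\<in>Q. u q = v q) \<Longrightarrow> u = v"
  unfolding basis_def by (auto simp: PiE_iff extensional_def fun_eq_iff)

lemma qid_entry: "finite Q \<Longrightarrow> qid Q s t = (if \<forall>q\<in>Q. s q = t q then 1 else 0)"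
  unfolding qid_def tensor_def I2_def
  by (induction Q rule: finite_induct) auto

lemma sum_single:
  assumes "finite A" "a \<in> A" "\<And>u. u \<in> A \<Longrightarrow> u \<noteq> a \<Longrightarrow> f u = 0"
  shows "sum f A = f a"
  using assms by (simp add: sum.remove sum.neutral)

lemma qmult_qid_entry:
  assumes "finite Q" "u \<in> basis Q"
  shows "qmult Q A (qid Q) s u = A s u"
proof -
  have fb: "finite (basis Q)" unfolding basis_def using assms by (simp add: finite_PiE)
  show ?thesis unfolding qmult_def
    apply (subst sum_single[where a=u])
    using assms fb basis_eq[of _ Q u] by (auto simp: qid_entry)
qed

lemma qmult_qid_entry2:
  assumes "finite Q" "u \<in> basis Q"
  shows "qmult Q (qid Q) A u s = A u s"
proof -
  have fb: "finite (basis Q)" unfolding basis_def using assms by (simp add: finite_PiE)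
  show ?thesis unfolding qmult_def
    apply (subst sum_single[where a=u])
    using assms fb basis_eq[of _ Q u] by (auto simp: qid_entry)
qed

lemma qmult_qid_mid:
  assumes "finite Q"
  shows "qmult Q (qmult Q A (qid Q)) B = qmult Q A B"
  unfolding qmult_def[of Q "qmult Q A (qid Q)"] using qmult_qid_entry[OF assms]
  by (simp add: qmult_def[of Q A B])

lemma qmult_qid_mid2:
  assumes "finite Q"
  shows "qmult Q A (qmult Q (qid Q) B) = qmult Q A B"
  unfolding qmult_def[of Q A "qmult Q (qid Q) B"] using qmult_qid_entry2[OF assms]
  by (simp add: qmult_def[of Q A B])


lemma sqrt2_sq: "complex_of_real (sqrt 2) * complex_of_real (sqrt 2) = 2"
  by (simp flip: of_real_mult)

lemma divr: "(a::complex) / complex_of_real (sqrt 2) * (b / complex_of_real (sqrt 2)) = a * b / 2"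
  by (simp add: sqrt2_sq)

lemma cnj_Had: "cnj (Had a b) = Had a b"
  by (simp add: Had_def)

lemma Had_vals: "Had False False = 1 / complex_of_real (sqrt 2)" "Had False True = 1 / complex_of_real (sqrt 2)"
  "Had True False = 1 / complex_of_real (sqrt 2)" "Had True True = -1 / complex_of_real (sqrt 2)"
  by (simp_all add: Had_def)

lemma Wpow_cases: "Wpow b = Had \<or> Wpow b = I2" by (simp add: Wpow_def)

lemma Had_unit1: "gmult (gadj Had) Had = I2"
  apply (intro ext) subgoal for a b
  by (cases a; cases b) (simp_all add: gmult_def gadj_def cnj_Had Had_vals I2_def divr sqrt2_sq)
  done

lemma Had_unit2: "gmult Had (gadj Had) = I2"
  apply (intro ext) subgoal for a b
  by (cases a; cases b) (simp_all add: gmult_def gadj_def cnj_Had Had_vals I2_def divr sqrt2_sq)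
  done

lemma gmult_I2_left[simp]: "gmult I2 G = G"
  apply (intro ext) subgoal for a b by (cases a) (auto simp: gmult_def I2_def) done
lemma gmult_I2_right[simp]: "gmult G I2 = G"
  apply (intro ext) subgoal for a b by (cases b) (auto simp: gmult_def I2_def) done
lemma gadj_I2[simp]: "gadj I2 = I2"
  by (auto simp: gadj_def I2_def fun_eq_iff)

lemma Wpow_unit1: "gmult (gadj (Wpow b)) (Wpow b) = I2"
  by (cases b) (auto simp: Wpow_def Had_unit1)
lemma Wpow_unit2: "gmult (Wpow b) (gadj (Wpow b)) = I2"
  by (cases b) (auto simp: Wpow_def Had_unit2)

lemma gconj_I2: "gconj (Wpow b) I2 = I2"
  by (simp add: gconj_def Wpow_unit2)

lemma HXH: "gmult (gmult Had X2) (gadj Had) = Z2"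
  apply (intro ext) subgoal for a c
  by (cases a; cases c) (simp_all add: gmult_def gadj_def cnj_Had Had_vals X2_def Z2_def divr sqrt2_sq)
  done

lemma HZH: "gmult (gmult Had Z2) (gadj Had) = X2"
  apply (intro ext) subgoal for a c
  by (cases a; cases c) (simp_all add: gmult_def gadj_def cnj_Had Had_vals X2_def Z2_def divr sqrt2_sq)
  done

lemma gconj_X2: "gconj (Wpow b) X2 = (if b then Z2 else X2)"
  by (cases b) (simp_all add: gconj_def Wpow_def HXH)

lemma gconj_Z2: "gconj (Wpow b) Z2 = (if b then X2 else Z2)"
  by (cases b) (simp_all add: gconj_def Wpow_def HZH)

lemma qconj_tensor:
  assumes "finite Q"
  shows "qconj Q (tensor Q G) (tensor Q F) = tensor Q (\<lambda>q. gconj (G q) (F q))"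
  unfolding qconj_def gconj_def by (simp add: qmult_tensor[OF assms] qadj_tensor)

lemma W_unit:
  assumes "finite Q"
  shows "qmult Q (qadj (tensor Q (\<lambda>q. Wpow (b q)))) (tensor Q (\<lambda>q. Wpow (b q))) = qid Q"
  unfolding qid_def by (simp add: qmult_tensor[OF assms] qadj_tensor Wpow_unit1)

lemma W_unit2:
  assumes "finite Q"
  shows "qmult Q (tensor Q (\<lambda>q. Wpow (b q))) (qadj (tensor Q (\<lambda>q. Wpow (b q)))) = qid Q"
  unfolding qid_def by (simp add: qmult_tensor[OF assms] qadj_tensor Wpow_unit2)

lemma qconj_mult:
  assumes Q: "finite Q" and U: "qmult Q (qadj V) V = qid Q"
  shows "qconj Q V (qmult Q A B) = qmult Q (qconj Q V A) (qconj Q V B)"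
proof -
  have "qmult Q (qconj Q V A) (qconj Q V B)
      = qmult Q (qmult Q V A) (qmult Q (qmult Q (qadj V) V) (qmult Q B (qadj V)))"
    unfolding qconj_def by (simp add: qmult_assoc[OF Q])
  also have "\<dots> = qmult Q (qmult Q V A) (qmult Q B (qadj V))"
    by (simp add: U qmult_qid_mid2[OF Q])
  also have "\<dots> = qconj Q V (qmult Q A B)"
    unfolding qconj_def by (simp add: qmult_assoc[OF Q])
  finally show ?thesis by simp
qed

lemma qconj_add: "qconj Q V (qadd A B) = qadd (qconj Q V A) (qconj Q V B)"
  unfolding qconj_def qmult_def qadd_def
  by (simp add: fun_eq_iff distrib_left distrib_right sum.distrib)

lemma qconj_scale: "qconj Q V (qscale c A) = qscale c (qconj Q V A)"
  unfolding qconj_def qmult_def qscale_def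
  by (simp add: fun_eq_iff sum_distrib_left sum_distrib_right mult_ac)

lemma qmult_sum_left: "qmult Q (qsum K F) B = qsum K (\<lambda>k. qmult Q (F k) B)"
proof (intro ext)
  fix s t
  have "qmult Q (qsum K F) B s t = (\<Sum>u\<in>basis Q. \<Sum>k\<in>K. F k s u * B u t)"
    unfolding qmult_def qsum_def by (simp add: sum_distrib_right)
  also have "\<dots> = (\<Sum>k\<in>K. \<Sum>u\<in>basis Q. F k s u * B u t)" by (rule sum.swap)
  finally show "qmult Q (qsum K F) B s t = qsum K (\<lambda>k. qmult Q (F k) B) s t"
    unfolding qmult_def qsum_def .
qed

lemma qmult_sum_right: "qmult Q A (qsum K F) = qsum K (\<lambda>k. qmult Q A (F k))"
proof (intro ext)
  fix s t
  have "qmult Q A (qsum K F) s t = (\<Sum>u\<in>basis Q. \<Sum>k\<in>K. A s u * F k u t)"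
    unfolding qmult_def qsum_def by (simp add: sum_distrib_left)
  also have "\<dots> = (\<Sum>k\<in>K. \<Sum>u\<in>basis Q. A s u * F k u t)" by (rule sum.swap)
  finally show "qmult Q A (qsum K F) s t = qsum K (\<lambda>k. qmult Q A (F k)) s t"
    unfolding qmult_def qsum_def .
qed

lemma qconj_sum:
  assumes "finite K"
  shows "qconj Q V (qsum K F) = qsum K (\<lambda>k. qconj Q V (F k))"
  unfolding qconj_def by (simp only: qmult_sum_left qmult_sum_right)

lemma qconj_on_qubit:
  assumes "finite Q"
  shows "qconj Q (tensor Q (\<lambda>q. Wpow (b q))) (on_qubit Q p G) = on_qubit Q p (gconj (Wpow (b p)) G)"
  unfolding on_qubit_def using assms
  by (simp add: qconj_tensor if_distrib gconj_I2 cong: if_cong)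

lemma qconj_qid:
  assumes "finite Q"
  shows "qconj Q (tensor Q (\<lambda>q. Wpow (b q))) (qid Q) = qid Q"
  unfolding qid_def using assms
  by (simp add: qconj_tensor gconj_I2)


definition Mk :: "nat set \<Rightarrow> nat \<Rightarrow> bool \<Rightarrow> qop" where
  "Mk Q d b = qadd (qadd (on_qubit Q d (gconj (Wpow b) X2)) (on_qubit Q d (gconj (Wpow b) Z2))) (qid Q)"
definition Sx :: "nat set \<Rightarrow> (nat \<Rightarrow> bool) \<Rightarrow> literal \<Rightarrow> qop" where
  "Sx Q x c = on_qubit Q (fst c) (if lit_val x c then X2 else Z2)"
definition Bk :: "nat set \<Rightarrow> (nat \<Rightarrow> bool) \<Rightarrow> (nat \<Rightarrow> nat \<Rightarrow> literal) \<Rightarrow> nat \<Rightarrow> qop" where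
  "Bk Q x lit k = qadd (qadd (qadd (Sx Q x (lit k 0)) (Sx Q x (lit k 1))) (Sx Q x (lit k 2))) (qscale 2 (qid Q))"

lemma Wxy_eq: "Wxy n m x y = tensor (qubits n m) (\<lambda>q. Wpow (if q < n then x q else y (q - n)))"
  unfolding Wxy_def by (simp add: if_distrib)

lemma finite_qubits[simp]: "finite (qubits n m)" by (simp add: qubits_def)

lemma qconj_Sop:
  assumes "finite Q" "fst c < n"
  shows "qconj Q (tensor Q (\<lambda>q. Wpow (if q < n then x q else y (q - n)))) (Sop Q c) = Sx Q x c"
  using assms unfolding Sop_def Sx_def lit_val_def
  by (cases "snd c") (auto simp: qconj_on_qubit gconj_X2 gconj_Z2)

lemma qsum_cong: "(\<And>k. k \<in> K \<Longrightarrow> F k = G k) \<Longrightarrow> qsum K F = qsum K G"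
  unfolding qsum_def by (simp add: fun_eq_iff)

lemma conj_H:
  assumes wf: "wf3sat n m lit"
  shows "qconj (qubits n m) (Wxy n m x y) (H_C n m lit)
    = qsum {..<m} (\<lambda>k. qscale (-1) (qmult (qubits n m) (Mk (qubits n m) (n+k) (y k)) (Bk (qubits n m) x lit k)))"
proof -
  let ?Q = "qubits n m"
  let ?b = "\<lambda>q. if q < n then x q else y (q - n)"
  have U: "qmult ?Q (qadj (tensor ?Q (\<lambda>q. Wpow (?b q)))) (tensor ?Q (\<lambda>q. Wpow (?b q))) = qid ?Q"
    by (rule W_unit) simp
  show ?thesis
    unfolding Wxy_eq H_C_def Let_def
    apply (simp add: qconj_sum)
    apply (rule qsum_cong)
    subgoal for k
      using wf unfolding wf3sat_def
      by (simp add: qconj_scale qconj_mult[OF _ U] qconj_add qconj_on_qubit qconj_qid qconj_Sop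
           Mk_def Bk_def)
    done
qed


lemma prod_I2: "finite A \<Longrightarrow> (\<Prod>q\<in>A. I2 (s q) (t q)) = (if \<forall>q\<in>A. s q = t q then 1 else 0)"
  unfolding I2_def by (induction A rule: finite_induct) auto

lemma on_qubit_entry:
  assumes "finite Q" "p \<in> Q"
  shows "on_qubit Q p G s t = G (s p) (t p) * (if \<forall>q\<in>Q-{p}. s q = t q then 1 else 0)"
proof -
  have c: "(\<Prod>q\<in>Q-{p}. (if q = p then G else I2) (s q) (t q)) = (\<Prod>q\<in>Q-{p}. I2 (s q) (t q))"
    by (rule prod.cong) auto
  have "on_qubit Q p G s t = G (s p) (t p) * (\<Prod>q\<in>Q-{p}. I2 (s q) (t q))"
    unfolding on_qubit_def tensor_def using assms
    by (simp add: prod.remove[of Q p] c)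
  then show ?thesis using assms by (simp add: prod_I2)
qed

definition qsym :: "qop \<Rightarrow> bool" where "qsym A \<longleftrightarrow> (\<forall>s t. A s t = A t s)"
definition gsym :: "gate \<Rightarrow> bool" where "gsym G \<longleftrightarrow> (\<forall>a b. G a b = G b a)"

lemma qsym_add: "qsym A \<Longrightarrow> qsym B \<Longrightarrow> qsym (qadd A B)"
  by (simp add: qsym_def qadd_def)
lemma qsym_scale: "qsym A \<Longrightarrow> qsym (qscale c A)"
  by (simp add: qsym_def qscale_def)
lemma qsym_sum: "(\<And>k. k \<in> K \<Longrightarrow> qsym (F k)) \<Longrightarrow> qsym (qsum K F)"
  by (simp add: qsym_def qsum_def)

lemma qmult_add_left: "qmult Q (qadd A B) C = qadd (qmult Q A C) (qmult Q B C)"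
  by (simp add: qmult_def qadd_def fun_eq_iff distrib_right sum.distrib)
lemma qmult_add_right: "qmult Q A (qadd B C) = qadd (qmult Q A B) (qmult Q A C)"
  by (simp add: qmult_def qadd_def fun_eq_iff distrib_left sum.distrib)
lemma qmult_scale_right: "qmult Q A (qscale c B) = qscale c (qmult Q A B)"
  by (simp add: qmult_def qscale_def fun_eq_iff sum_distrib_left mult_ac)

lemma qsym_tensor_mult:
  assumes "finite Q" "\<And>q. gsym (gmult (F q) (G q))"
  shows "qsym (qmult Q (tensor Q F) (tensor Q G))"
proof -
  have "qsym (tensor Q (\<lambda>q. gmult (F q) (G q)))"
    using assms(2) unfolding qsym_def tensor_def gsym_def by simp
  then show ?thesis by (simp add: qmult_tensor[OF assms(1)])
qed

lemma gsym_I2[simp]: "gsym I2" and gsym_X2[simp]: "gsym X2" and gsym_Z2[simp]: "gsym Z2"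
  by (auto simp: gsym_def I2_def X2_def Z2_def)

lemma gsym_if[simp]: "gsym A \<Longrightarrow> gsym B \<Longrightarrow> gsym (if b then A else B)" by simp

lemma sym_oq_oq: "finite Q \<Longrightarrow> d \<noteq> i \<Longrightarrow> gsym G \<Longrightarrow> gsym P \<Longrightarrow>
    qsym (qmult Q (on_qubit Q d G) (on_qubit Q i P))"
  unfolding on_qubit_def by (rule qsym_tensor_mult) auto
lemma sym_oq_id: "finite Q \<Longrightarrow> gsym G \<Longrightarrow> qsym (qmult Q (on_qubit Q d G) (qid Q))"
  unfolding on_qubit_def qid_def by (rule qsym_tensor_mult) auto
lemma sym_id_oq: "finite Q \<Longrightarrow> gsym G \<Longrightarrow> qsym (qmult Q (qid Q) (on_qubit Q d G))"
  unfolding on_qubit_def qid_def by (rule qsym_tensor_mult) auto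
lemma sym_id_id: "finite Q \<Longrightarrow> qsym (qmult Q (qid Q) (qid Q))"
  unfolding qid_def by (rule qsym_tensor_mult) auto

lemma gsym_gX: "gsym (gconj (Wpow b) X2)" "gsym (gconj (Wpow b) Z2)"
  by (simp_all add: gconj_X2 gconj_Z2)

lemma qsym_MB:
  assumes wf: "wf3sat n m lit" and k: "k < m"
  shows "qsym (qmult (qubits n m) (Mk (qubits n m) (n+k) b) (Bk (qubits n m) x lit k))"
proof -
  have ne: "fst (lit k j) \<noteq> n + k" if "j < 3" for j
    using wf k that unfolding wf3sat_def by fastforce
  have n0: "n + k \<noteq> fst (lit k 0)" "n + k \<noteq> fst (lit k 1)" "n + k \<noteq> fst (lit k 2)"
    using ne[of 0] ne[of 1] ne[of 2] by auto
  show ?thesis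
    unfolding Mk_def Bk_def Sx_def
    apply (simp only: qmult_add_left qmult_add_right qmult_scale_right)
    apply (intro qsym_add qsym_scale sym_oq_oq sym_oq_id sym_id_oq sym_id_id)
    apply (simp_all only: n0 gsym_gX finite_qubits not_False_eq_True)
    apply (simp_all)
    done
qed

lemma ind_split: "(\<forall>q\<in>Q. s q = t q) \<longleftrightarrow> (p \<in> Q \<longrightarrow> s p = t p) \<and> (\<forall>q\<in>Q-{p}. s q = t q)"
  by auto

lemma Mk_nonneg:
  assumes "finite Q" "d \<in> Q"
  shows "0 \<le> Mk Q d b s t"
proof -
  have e: "Mk Q d b s t = (if b then Z2 else X2) (s d) (t d) * (if \<forall>q\<in>Q-{d}. s q = t q then 1 else 0)
     + (if b then X2 else Z2) (s d) (t d) * (if \<forall>q\<in>Q-{d}. s q = t q then 1 else 0)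
     + (if s d = t d \<and> (\<forall>q\<in>Q-{d}. s q = t q) then 1 else 0)"
    unfolding Mk_def qadd_def using assms
    by (simp add: on_qubit_entry qid_entry gconj_X2 gconj_Z2 ind_split[of Q s t d])
  show ?thesis unfolding e
    by (cases "s d"; cases "t d"; cases b) (auto simp: X2_def Z2_def less_eq_complex_def)
qed

lemma oq_nonneg_off:
  assumes "finite Q" "i \<in> Q" "\<not> (\<forall>q\<in>Q. s q = t q)" "\<And>a b. a \<noteq> b \<Longrightarrow> 0 \<le> G a b"
  shows "0 \<le> on_qubit Q i G s t"
proof (cases "\<forall>q\<in>Q-{i}. s q = t q")
  case True
  then have "s i \<noteq> t i" using assms(3) by auto
  then have "0 \<le> G (s i) (t i)" by (rule assms(4))
  then show ?thesis by (simp add: on_qubit_entry[OF assms(1,2)] True)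
next
  case False
  show ?thesis by (simp only: on_qubit_entry[OF assms(1,2)] if_not_P[OF False] mult_zero_right order_refl)
qed

lemma oq_diag:
  assumes "finite Q" "i \<in> Q" "\<forall>q\<in>Q. s q = t q"
  shows "on_qubit Q i G s t = G (s i) (s i)"
  using assms by (simp add: on_qubit_entry)

lemma XZ_off: "a \<noteq> b \<Longrightarrow> 0 \<le> (if c then X2 else Z2) a b"
  by (auto simp: X2_def Z2_def less_eq_complex_def)

lemma Bk_nonneg:
  assumes Q: "finite Q" and i: "\<And>j. j < 3 \<Longrightarrow> fst (lit k j) \<in> Q"
    and sat: "\<exists>j<3. lit_val x (lit k j)"
  shows "0 \<le> Bk Q x lit k s t"
proof (cases "\<forall>q\<in>Q. s q = t q")
  case True
  have i0: "fst (lit k 0) \<in> Q" and i1: "fst (lit k 1) \<in> Q" and i2: "fst (lit k 2) \<in> Q" using i by auto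
  have sat': "lit_val x (lit k 0) \<or> lit_val x (lit k 1) \<or> lit_val x (lit k 2)"
  proof -
    obtain j where j: "j < 3" "lit_val x (lit k j)" using sat by blast
    then have "j = 0 \<or> j = 1 \<or> j = 2" by auto
    then show ?thesis using j by auto
  qed
  show ?thesis
    unfolding Bk_def qadd_def qscale_def Sx_def
    using True Q i0 i1 i2 sat'
    by (auto simp: oq_diag qid_entry X2_def Z2_def less_eq_complex_def)
next
  case False
  have i0: "fst (lit k 0) \<in> Q" and i1: "fst (lit k 1) \<in> Q" and i2: "fst (lit k 2) \<in> Q" using i by auto
  have z: "qid Q s t = 0" by (simp add: qid_entry[OF Q] False)
  have t0: "0 \<le> on_qubit Q (fst (lit k 0)) (if lit_val x (lit k 0) then X2 else Z2) s t"
    by (rule oq_nonneg_off[OF Q i0 False XZ_off])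
  have t1: "0 \<le> on_qubit Q (fst (lit k 1)) (if lit_val x (lit k 1) then X2 else Z2) s t"
    by (rule oq_nonneg_off[OF Q i1 False XZ_off])
  have t2: "0 \<le> on_qubit Q (fst (lit k 2)) (if lit_val x (lit k 2) then X2 else Z2) s t"
    by (rule oq_nonneg_off[OF Q i2 False XZ_off])
  show ?thesis
    unfolding Bk_def qadd_def qscale_def Sx_def z
    by (intro add_nonneg_nonneg t0 t1 t2) simp
qed

lemma qmult_nonneg:
  assumes "\<And>s u. 0 \<le> A s u" "\<And>u t. 0 \<le> B u t"
  shows "0 \<le> qmult Q A B s t"
  unfolding qmult_def using assms by (simp add: sum_nonneg mult_nonneg_nonneg)


lemma Mk_supp:
  assumes "finite Q" "d \<in> Q" "Mk Q d b s u \<noteq> 0"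
  shows "\<forall>q\<in>Q-{d}. s q = u q"
proof (rule ccontr)
  assume h: "\<not> (\<forall>q\<in>Q-{d}. s q = u q)"
  then have h2: "\<not> (\<forall>q\<in>Q. s q = u q)" by auto
  have "Mk Q d b s u = 0" unfolding Mk_def qadd_def
    using assms(1,2) h h2 by (simp only: on_qubit_entry qid_entry if_False mult_zero_right add_0)
  then show False using assms(3) by simp
qed

lemma Bk_supp:
  assumes "finite Q" "\<And>j. j < 3 \<Longrightarrow> fst (lit k j) \<in> Q" "\<And>j. j < 3 \<Longrightarrow> fst (lit k j) \<noteq> p"
    "p \<in> Q" "Bk Q x lit k u t \<noteq> 0"
  shows "u p = t p"
proof -
  have i0: "fst (lit k 0) \<in> Q" "fst (lit k 0) \<noteq> p" and i1: "fst (lit k 1) \<in> Q" "fst (lit k 1) \<noteq> p"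
    and i2: "fst (lit k 2) \<in> Q" "fst (lit k 2) \<noteq> p" using assms(2,3) by auto
  show ?thesis
    using assms(1,4,5) i0 i1 i2 unfolding Bk_def qadd_def qscale_def Sx_def
    by (auto simp: on_qubit_entry qid_entry split: if_splits)
qed

lemma Mk_entry1:
  assumes "finite Q" "d \<in> Q" "s d = False" "t d = True" "\<forall>q\<in>Q-{d}. s q = t q"
  shows "Mk Q d False s t = 1"
  using assms unfolding Mk_def qadd_def
  by (auto simp: on_qubit_entry qid_entry gconj_X2 gconj_Z2 X2_def Z2_def)

lemma Bk_entry_unsat:
  assumes Q: "finite Q" and i: "\<And>j. j < 3 \<Longrightarrow> fst (lit k j) \<in> Q"
    and uns: "\<And>j. j < 3 \<Longrightarrow> \<not> lit_val x (lit k j)"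
    and tt: "\<And>j. j < 3 \<Longrightarrow> t (fst (lit k j)) = True"
  shows "Bk Q x lit k t t = -1"
proof -
  have i0: "fst (lit k 0) \<in> Q" and i1: "fst (lit k 1) \<in> Q" and i2: "fst (lit k 2) \<in> Q" using i by auto
  have u: "\<not> lit_val x (lit k 0)" "\<not> lit_val x (lit k 1)" "\<not> lit_val x (lit k 2)" using uns by auto
  have t: "t (fst (lit k 0))" "t (fst (lit k 1))" "t (fst (lit k 2))" using tt by auto
  show ?thesis
    unfolding Bk_def qadd_def qscale_def Sx_def
    using Q i0 i1 i2 u t by (simp add: oq_diag qid_entry Z2_def)
qed


lemma basis_mem: "(\<lambda>q. if q \<in> Q then f q else undefined) \<in> basis Q"
  unfolding basis_def by auto

theorem lemma5p4:
  fixes n m :: nat and lit :: "nat \<Rightarrow> nat \<Rightarrow> literal" and x :: "nat \<Rightarrow> bool"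
  assumes "wf3sat n m lit"
  shows "sat3 m lit x \<longleftrightarrow>
    (\<forall>y :: nat \<Rightarrow> bool. sym_Zmatrix (qubits n m)
       (qmult (qubits n m) (qmult (qubits n m) (Wxy n m x y) (H_C n m lit)) (qadj (Wxy n m x y))))"
proof -
  let ?Q = "qubits n m"
  have wf: "\<And>k j. k < m \<Longrightarrow> j < 3 \<Longrightarrow> fst (lit k j) < n"
    using assms unfolding wf3sat_def by blast
  have inQ: "\<And>k j. k < m \<Longrightarrow> j < 3 \<Longrightarrow> fst (lit k j) \<in> ?Q"
    using wf by (fastforce simp: qubits_def)
  have dQ: "\<And>k. k < m \<Longrightarrow> n + k \<in> ?Q" by (simp add: qubits_def)
  define E where "E y = qsum {..<m} (\<lambda>k. qscale (-1) (qmult ?Q (Mk ?Q (n+k) (y k)) (Bk ?Q x lit k)))" for y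
  have EE: "qmult ?Q (qmult ?Q (Wxy n m x y) (H_C n m lit)) (qadj (Wxy n m x y)) = E y" for y
    using conj_H[OF assms, of x y] unfolding qconj_def E_def by simp
  show ?thesis
  proof
    assume sat: "sat3 m lit x"
    show "\<forall>y. sym_Zmatrix ?Q (qmult ?Q (qmult ?Q (Wxy n m x y) (H_C n m lit)) (qadj (Wxy n m x y)))"
    proof
      fix y
      have sym: "qsym (E y)" unfolding E_def
        by (intro qsym_sum qsym_scale qsym_MB[OF assms]) simp
      have np: "E y s t \<le> 0" for s t
      proof -
        have "0 \<le> qmult ?Q (Mk ?Q (n+k) (y k)) (Bk ?Q x lit k) s t" if "k < m" for k
          by (rule qmult_nonneg[OF Mk_nonneg Bk_nonneg]) (use that sat inQ dQ in \<open>auto simp: sat3_def\<close>)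
        then show ?thesis unfolding E_def qsum_def qscale_def
          by (auto intro!: sum_nonpos)
      qed
      show "sym_Zmatrix ?Q (qmult ?Q (qmult ?Q (Wxy n m x y) (H_C n m lit)) (qadj (Wxy n m x y)))"
        unfolding EE sym_Zmatrix_def
      proof (intro ballI conjI impI)
        fix s t
        have "Im (E y s t) = 0" "Re (E y s t) \<le> 0" using np[of s t] by (auto simp: less_eq_complex_def)
        moreover have "Im (E y t s) = 0" using np[of t s] by (auto simp: less_eq_complex_def)
        moreover have "E y s t = E y t s" using sym by (simp add: qsym_def)
        ultimately show "E y s t = cnj (E y t s)" "Im (E y s t) = 0" "Re (E y s t) \<le> 0"
          by (auto simp: complex_eq_iff)
      qed
    qed
  next
    assume all: "\<forall>y. sym_Zmatrix ?Q (qmult ?Q (qmult ?Q (Wxy n m x y) (H_C n m lit)) (qadj (Wxy n m x y)))"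
    show "sat3 m lit x"
    proof (rule ccontr)
      assume "\<not> sat3 m lit x"
      then obtain k where k: "k < m" and uns: "\<And>j. j < 3 \<Longrightarrow> \<not> lit_val x (lit k j)"
        unfolding sat3_def by blast
      define y :: "nat \<Rightarrow> bool" where "y = (\<lambda>_. False)"
      define d where "d = n + k"
      define s where "s = (\<lambda>q. if q \<in> ?Q then q < n else undefined)"
      define t where "t = (\<lambda>q. if q \<in> ?Q then q < n \<or> q = d else undefined)"
      have sB: "s \<in> basis ?Q" unfolding s_def by (rule basis_mem)
      have tB: "t \<in> basis ?Q" unfolding t_def by (rule basis_mem)
      have dQ': "d \<in> ?Q" using dQ[OF k] by (simp add: d_def)
      have sd: "s d = False" and td: "t d = True" using dQ' by (auto simp: s_def t_def d_def)
      have st: "\<forall>q\<in>?Q-{d}. s q = t q" by (auto simp: s_def t_def)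
      have fb: "finite (basis ?Q)" unfolding basis_def by (simp add: finite_PiE)
      have zero: "qmult ?Q (Mk ?Q (n+k') (y k')) (Bk ?Q x lit k') s t = 0" if k': "k' < m" "k' \<noteq> k" for k'
        unfolding qmult_def
      proof (rule sum.neutral, rule ballI)
        fix u assume uB: "u \<in> basis ?Q"
        show "Mk ?Q (n+k') (y k') s u * Bk ?Q x lit k' u t = 0"
        proof (rule ccontr)
          assume "Mk ?Q (n+k') (y k') s u * Bk ?Q x lit k' u t \<noteq> 0"
          then have a: "Mk ?Q (n+k') (y k') s u \<noteq> 0" and b: "Bk ?Q x lit k' u t \<noteq> 0" by auto
          have "s d = u d" using Mk_supp[OF _ dQ[OF k'(1)] a] dQ' k' by (auto simp: d_def)
          moreover have "u d = t d"
          proof (rule Bk_supp[OF _ inQ[OF k'(1)] _ dQ' b])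
            fix j :: nat assume "j < 3"
            then show "fst (lit k' j) \<noteq> d" using wf[OF k'(1)] unfolding d_def by (metis not_add_less1)
          qed simp
          ultimately show False using sd td by simp
        qed
      qed
      have one: "qmult ?Q (Mk ?Q (n+k) (y k)) (Bk ?Q x lit k) s t = -1"
      proof -
        have "qmult ?Q (Mk ?Q (n+k) (y k)) (Bk ?Q x lit k) s t
            = Mk ?Q (n+k) (y k) s t * Bk ?Q x lit k t t"
          unfolding qmult_def
        proof (rule sum_single[OF fb tB])
          fix u assume uB: "u \<in> basis ?Q" and ut: "u \<noteq> t"
          show "Mk ?Q (n+k) (y k) s u * Bk ?Q x lit k u t = 0"
          proof (rule ccontr)
            assume "Mk ?Q (n+k) (y k) s u * Bk ?Q x lit k u t \<noteq> 0"
            then have a: "Mk ?Q (n+k) (y k) s u \<noteq> 0" and b: "Bk ?Q x lit k u t \<noteq> 0" by auto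
            have h1: "\<forall>q\<in>?Q-{d}. s q = u q" using Mk_supp[OF _ dQ' a[folded d_def]] by simp
            have h2: "u d = t d"
            proof (rule Bk_supp[OF _ inQ[OF k] _ dQ' b])
              fix j :: nat assume "j < 3"
              then show "fst (lit k j) \<noteq> d" using wf[OF k] unfolding d_def by (metis not_add_less1)
            qed simp
            have "\<forall>q\<in>?Q. u q = t q" using h1 h2 st by (metis DiffI singletonD)
            then show False using basis_eq[OF uB tB] ut by simp
          qed
        qed
        also have "Mk ?Q (n+k) (y k) s t = 1"
          unfolding y_def using Mk_entry1[OF _ dQ' sd td st] by (simp add: d_def)
        also have "Bk ?Q x lit k t t = -1"
        proof (rule Bk_entry_unsat)
          show "finite ?Q" by simp
        next
          fix j :: nat assume j: "j < 3"
          then show "fst (lit k j) \<in> ?Q" using inQ[OF k j] by simp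
        next
          fix j :: nat assume j: "j < 3"
          then show "\<not> lit_val x (lit k j)" using uns[OF j] by simp
        next
          fix j :: nat assume j: "j < 3"
          then show "t (fst (lit k j)) = True" using inQ[OF k j] wf[OF k j] by (simp add: t_def)
        qed
        finally show ?thesis by simp
      qed
      have "E y s t = (\<Sum>k'\<in>{..<m}. - qmult ?Q (Mk ?Q (n+k') (y k')) (Bk ?Q x lit k') s t)"
        unfolding E_def qsum_def qscale_def by simp
      also have "\<dots> = - qmult ?Q (Mk ?Q (n+k) (y k)) (Bk ?Q x lit k) s t"
        by (rule sum_single) (use k zero in auto)
      also have "\<dots> = 1" using one by simp
      finally have Est: "E y s t = 1" .
      have "s \<noteq> t" using sd td by auto
      then have "Re (E y s t) \<le> 0" using all[rule_format, of y] sB tB unfolding EE sym_Zmatrix_def by blast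
      then show False using Est by simp
    qed
  qed
qed

end
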